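(* Let $f:M\to M$ be a $C^1$ Anosov diffeomorphism of a compact surface and $\mu$ an $f$-invariant ergodic probability measure. If there exist $x_0\in M$ and a measurable subset of the stable leaf $\mathcal F^s(x_0)$ with positive $\mu$-measure, then $\mu$ is periodic, i.e. supported on a single periodic orbit.
   Context: $\mathcal F^s$ is the $f$-invariant stable foliation of $f$, with leaves tangent to $E^s$; $\mathcal F^s(x_0)$ is the leaf through $x_0$. *)

theory Defs
  imports "HOL-Analysis.Analysis" "HOL-Probability.Probability"
begin

text \<open>Compact surfaces are modelled as compact C^1 embedded 2-dimensional submanifolds
  (without boundary) of a Euclidean space (every compact surface embeds, Whitney).\<close>

definition C1_surface :: "'a::euclidean_space set \<Rightarrow> bool" where
  "C1_surface M \<longleftrightarrow>
     (\<forall>x\<in>M. \<exists>V W (\<phi>::real \<times> real \<Rightarrow> 'a) \<psi> \<phi>'.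
        open V \<and> open W \<and> x \<in> W \<and>
        homeomorphism V (M \<inter> W) \<phi> \<psi> \<and>
        (\<forall>v\<in>V. (\<phi> has_derivative blinfun_apply (\<phi>' v)) (at v)) \<and>
        continuous_on V \<phi>' \<and>
        (\<forall>v\<in>V. inj (blinfun_apply (\<phi>' v))))"

definition compact_surface :: "'a::euclidean_space set \<Rightarrow> bool" where
  "compact_surface M \<longleftrightarrow> M \<noteq> {} \<and> compact M \<and> connected M \<and> C1_surface M"

definition tangent_space :: "'a::euclidean_space set \<Rightarrow> 'a \<Rightarrow> 'a set" where
  "tangent_space M x = {v. \<exists>(\<gamma>::real \<Rightarrow> 'a) \<epsilon>. \<epsilon> > 0 \<and> (\<forall>t\<in>{-\<epsilon><..<\<epsilon>}. \<gamma> t \<in> M) \<and>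
      \<gamma> 0 = x \<and> (\<gamma> has_vector_derivative v) (at 0)}"

definition local_C1_ext :: "'a::euclidean_space set \<Rightarrow> ('a \<Rightarrow> 'a) \<Rightarrow> 'a \<Rightarrow> ('a \<Rightarrow> 'a) \<Rightarrow> ('a \<Rightarrow> ('a \<Rightarrow>\<^sub>L 'a)) \<Rightarrow> bool" where
  "local_C1_ext M f x F F' \<longleftrightarrow> (\<exists>U. open U \<and> x \<in> U \<and> (\<forall>y\<in>M \<inter> U. F y = f y) \<and>
      (\<forall>y\<in>U. (F has_derivative blinfun_apply (F' y)) (at y)) \<and> continuous_on U F')"

definition C1_map_on :: "'a::euclidean_space set \<Rightarrow> ('a \<Rightarrow> 'a) \<Rightarrow> bool" where
  "C1_map_on M f \<longleftrightarrow> (\<forall>x\<in>M. \<exists>F F'. local_C1_ext M f x F F')"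

definition C1_diffeo_on :: "'a::euclidean_space set \<Rightarrow> ('a \<Rightarrow> 'a) \<Rightarrow> bool" where
  "C1_diffeo_on M f \<longleftrightarrow> bij_betw f M M \<and> C1_map_on M f \<and> C1_map_on M (inv_into M f)"

text \<open>The differential Df_x (meaningful on tangent_space M x, where it is independent of the extension).\<close>
definition dmap :: "'a::euclidean_space set \<Rightarrow> ('a \<Rightarrow> 'a) \<Rightarrow> 'a \<Rightarrow> 'a \<Rightarrow> 'a" where
  "dmap M f x = (SOME L. \<exists>F F'. local_C1_ext M f x F F' \<and> L = blinfun_apply (F' x))"

fun dpow :: "'a::euclidean_space set \<Rightarrow> ('a \<Rightarrow> 'a) \<Rightarrow> nat \<Rightarrow> 'a \<Rightarrow> 'a \<Rightarrow> 'a" where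
  "dpow M f 0 x = id"
| "dpow M f (Suc n) x = dmap M f ((f ^^ n) x) \<circ> dpow M f n x"

definition anosov :: "'a::euclidean_space set \<Rightarrow> ('a \<Rightarrow> 'a) \<Rightarrow> bool" where
  "anosov M f \<longleftrightarrow> C1_diffeo_on M f \<and>
    (\<exists>Es Eu (C::real) (lam::real). C > 0 \<and> 0 < lam \<and> lam < 1 \<and>
      (\<forall>x\<in>M. subspace (Es x) \<and> subspace (Eu x) \<and> Es x \<inter> Eu x = {0} \<and>
         {a + b | a b. a \<in> Es x \<and> b \<in> Eu x} = tangent_space M x \<and>
         dmap M f x ` Es x = Es (f x) \<and> dmap M f x ` Eu x = Eu (f x) \<and>
         (\<forall>n. \<forall>v\<in>Es x. norm (dpow M f n x v) \<le> C * lam ^ n * norm v) \<and>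
         (\<forall>n. \<forall>v\<in>Eu x. norm v \<le> C * lam ^ n * norm (dpow M f n x v))))"

definition stable_leaf :: "'a::euclidean_space set \<Rightarrow> ('a \<Rightarrow> 'a) \<Rightarrow> 'a \<Rightarrow> 'a set" where
  "stable_leaf M f x0 = {y\<in>M. (\<lambda>n. dist ((f ^^ n) x0) ((f ^^ n) y)) \<longlonglongrightarrow> 0}"

definition invariant_measure :: "'a measure \<Rightarrow> ('a \<Rightarrow> 'a) \<Rightarrow> bool" where
  "invariant_measure \<mu> f \<longleftrightarrow> f \<in> measurable \<mu> \<mu> \<and>
     (\<forall>A\<in>sets \<mu>. emeasure \<mu> (f -` A \<inter> space \<mu>) = emeasure \<mu> A)"

definition ergodic_measure :: "'a measure \<Rightarrow> ('a \<Rightarrow> 'a) \<Rightarrow> bool" where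
  "ergodic_measure \<mu> f \<longleftrightarrow> invariant_measure \<mu> f \<and>
     (\<forall>A\<in>sets \<mu>. f -` A \<inter> space \<mu> = A \<longrightarrow> emeasure \<mu> A = 0 \<or> emeasure \<mu> A = 1)"

definition periodic_measure :: "'a measure \<Rightarrow> ('a \<Rightarrow> 'a) \<Rightarrow> bool" where
  "periodic_measure \<mu> f \<longleftrightarrow> (\<exists>p\<in>space \<mu>. \<exists>n>0. (f ^^ n) p = p \<and>
     {(f ^^ k) p | k. k < n} \<in> sets \<mu> \<and> emeasure \<mu> {(f ^^ k) p | k. k < n} = 1)"

end

theory Submission
  imports Defs
begin

theorem mainTheorem7:
  fixes M :: "'a::euclidean_space set" and f :: "'a \<Rightarrow> 'a" and \<mu> :: "'a measure" and x0 :: 'a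
  assumes "compact_surface M"
    and "anosov M f"
    and "prob_space \<mu>"
    and "sets \<mu> = sets (restrict_space borel M)"
    and "ergodic_measure \<mu> f"
    and "x0 \<in> M"
    and "\<exists>A\<in>sets \<mu>. A \<subseteq> stable_leaf M f x0 \<and> emeasure \<mu> A > 0"
  shows "periodic_measure \<mu> f"
proof -
  interpret P: prob_space \<mu> by fact
  have spM: "space \<mu> = M"
    using sets_eq_imp_space_eq[OF assms(4)] by (simp add: space_restrict_space)
  have bor: "B \<inter> M \<in> sets \<mu>" if "B \<in> sets borel" for B
    using that assms(4) by (auto simp: sets_restrict_space)
  have cpt: "compact M" using assms(1) by (simp add: compact_surface_def)
  have bij: "bij_betw f M M" using assms(2) by (simp add: anosov_def C1_diffeo_on_def)
  have injf: "inj_on f M" and fM: "\<And>x. x \<in> M \<Longrightarrow> f x \<in> M"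
    using bij by (auto simp: bij_betw_def)
  have inv: "invariant_measure \<mu> f" using assms(5) by (simp add: ergodic_measure_def)
  have fmeas: "f \<in> measurable \<mu> \<mu>" using inv by (simp add: invariant_measure_def)
  have fpres: "\<And>B. B \<in> sets \<mu> \<Longrightarrow> measure \<mu> (f -` B \<inter> M) = measure \<mu> B"
    using inv spM by (simp add: invariant_measure_def measure_def)
  have fnM: "(f^^n) x \<in> M" if "x \<in> M" for n x
    using that by (induction n) (auto intro: fM)
  have fnmeas: "(f^^n) \<in> measurable \<mu> \<mu>" for n by (rule measurable_compose_n[OF fmeas])
  have fnsets: "(f^^n) -` B \<inter> M \<in> sets \<mu>" if "B \<in> sets \<mu>" for n B
    using measurable_sets[OF fnmeas that] spM by simp
  have fnpres: "measure \<mu> ((f^^n) -` B \<inter> M) = measure \<mu> B" if "B \<in> sets \<mu>" for n B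
    using that
  proof (induction n arbitrary: B)
    case 0 have "B \<subseteq> M" using sets.sets_into_space[OF 0] spM by simp
    then show ?case by (simp add: Int_absorb2)
  next
    case (Suc n)
    have "(f^^Suc n) -` B \<inter> M = f -` ((f^^n) -` B \<inter> M) \<inter> M"
      using fM by (auto simp: funpow_swap1)
    then have "measure \<mu> ((f^^Suc n) -` B \<inter> M) = measure \<mu> ((f^^n) -` B \<inter> M)"
      using fpres[OF fnsets[OF Suc.prems]] by metis
    then show ?case using Suc.IH[OF Suc.prems] by (simp only:)
  qed
  obtain A where A: "A \<in> sets \<mu>" "A \<subseteq> stable_leaf M f x0" "emeasure \<mu> A > 0" using assms(7) by blast
  define c where "c = measure \<mu> A"
  have c: "c > 0" using A P.emeasure_eq_measure c_def by simp
  have step2: "\<exists>N. \<forall>n\<ge>N. measure \<mu> (cball ((f^^n) x0) e \<inter> M) \<ge> c/2" if e: "e > 0" for e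
  proof -
    define An where "An N = A \<inter> (\<Inter>n\<in>{N..}. (f^^n) -` cball ((f^^n) x0) e \<inter> M)" for N
    have Ans: "An N \<in> sets \<mu>" for N
    proof -
      have "(\<Inter>n\<in>{N..}. (f^^n) -` cball ((f^^n) x0) e \<inter> M) \<in> sets \<mu>" (is "?I \<in> _")
      proof -
        have *: "(f^^n) -` cball ((f^^n) x0) e \<inter> M \<in> sets \<mu>" for n
        proof -
          have "(f^^n) -` cball ((f^^n) x0) e \<inter> M = (f^^n) -` (cball ((f^^n) x0) e \<inter> M) \<inter> M"
            using fnM by auto
          then show ?thesis using fnsets[OF bor[of "cball ((f^^n) x0) e"]] by simp
        qed
        show ?thesis by (intro sets.countable_INT') (use * in auto)
      qed
      then show ?thesis using A(1) by (simp add: An_def)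
    qed
    have inc: "incseq An" unfolding incseq_def An_def by auto
    have un: "(\<Union>N. An N) = A"
    proof
      show "(\<Union>N. An N) \<subseteq> A" by (auto simp: An_def)
    next
      show "A \<subseteq> (\<Union>N. An N)"
      proof
        fix y assume y: "y \<in> A"
        then have yM: "y \<in> M" and lim: "(\<lambda>n. dist ((f ^^ n) x0) ((f ^^ n) y)) \<longlonglongrightarrow> 0"
          using A(2) by (auto simp: stable_leaf_def)
        from lim e obtain N where "\<forall>n\<ge>N. dist ((f ^^ n) x0) ((f ^^ n) y) < e"
          using LIMSEQ_D[OF lim e] by auto
        then have "y \<in> An N" using y yM by (auto simp: An_def less_imp_le)
        then show "y \<in> (\<Union>N. An N)" by blast
      qed
    qed
    have "(\<lambda>N. measure \<mu> (An N)) \<longlonglongrightarrow> c"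
      using P.finite_Lim_measure_incseq[of An] Ans inc un c_def by auto
    then have "eventually (\<lambda>N. measure \<mu> (An N) > c/2) sequentially"
      using c by (intro order_tendstoD) auto
    then obtain N where N: "measure \<mu> (An N) > c/2" by (auto simp: eventually_sequentially)
    have "measure \<mu> (cball ((f^^n) x0) e \<inter> M) \<ge> c/2" if "n \<ge> N" for n
    proof -
      have cs: "cball ((f^^n) x0) e \<inter> M \<in> sets \<mu>" by (intro bor) auto
      have "An N \<subseteq> (f^^n) -` (cball ((f^^n) x0) e \<inter> M) \<inter> M"
        using that fnM by (auto simp: An_def)
      then have "measure \<mu> (An N) \<le> measure \<mu> ((f^^n) -` (cball ((f^^n) x0) e \<inter> M) \<inter> M)"
        by (intro P.finite_measure_mono fnsets cs)
      also have "\<dots> = measure \<mu> (cball ((f^^n) x0) e \<inter> M)" by (rule fnpres[OF cs])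
      finally show ?thesis using N by simp
    qed
    then show ?thesis by blast
  qed
  have "seq_compact M" by (rule compact_imp_seq_compact[OF cpt])
  then obtain z r where zM: "z \<in> M" and r: "strict_mono r" and lim: "((\<lambda>n. (f^^n) x0) \<circ> r) \<longlonglongrightarrow> z"
    using \<open>seq_compact M\<close> fnM[OF assms(6)] unfolding seq_compact_def by meson
  have step3: "measure \<mu> (cball z (2*e) \<inter> M) \<ge> c/2" if e: "e > 0" for e
  proof -
    obtain N where N: "\<forall>n\<ge>N. measure \<mu> (cball ((f^^n) x0) e \<inter> M) \<ge> c/2" using step2[OF e] by blast
    obtain K where K: "\<forall>k\<ge>K. dist (((\<lambda>n. (f^^n) x0) \<circ> r) k) z < e"
      using lim e unfolding LIMSEQ_def by meson
    define k where "k = max K N"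
    have kN: "r k \<ge> N" using seq_suble[OF r, of k] k_def by linarith
    have dk: "dist ((f^^(r k)) x0) z < e" using K k_def by auto
    have "cball ((f^^(r k)) x0) e \<inter> M \<subseteq> cball z (2*e) \<inter> M"
    proof
      fix y assume "y \<in> cball ((f^^(r k)) x0) e \<inter> M"
      then have "dist ((f^^(r k)) x0) y \<le> e" "y \<in> M" by auto
      moreover have "dist z y \<le> dist z ((f^^(r k)) x0) + dist ((f^^(r k)) x0) y" by (rule dist_triangle)
      ultimately show "y \<in> cball z (2*e) \<inter> M" using dk by (simp add: dist_commute)
    qed
    then have "measure \<mu> (cball ((f^^(r k)) x0) e \<inter> M) \<le> measure \<mu> (cball z (2*e) \<inter> M)"
      by (intro P.finite_measure_mono bor) auto
    moreover have "measure \<mu> (cball ((f^^(r k)) x0) e \<inter> M) \<ge> c/2" using N kN by blast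
    ultimately show ?thesis by linarith
  qed
  have mz: "measure \<mu> {z} \<ge> c/2"
  proof -
    define D where "D k = cball z (2 * (1 / real (Suc k))) \<inter> M" for k
    have Ds: "range D \<subseteq> sets \<mu>" unfolding D_def using bor by auto
    have dec: "decseq D" unfolding decseq_def D_def
    proof (intro allI impI)
      fix m n :: nat assume "m \<le> n"
      then have "2 * (1 / real (Suc n)) \<le> 2 * (1 / real (Suc m))"
        by (simp add: frac_le)
      then show "cball z (2 * (1 / real (Suc n))) \<inter> M \<subseteq> cball z (2 * (1 / real (Suc m))) \<inter> M"
        by auto
    qed
    have int: "(\<Inter>k. D k) = {z}"
    proof
      show "{z} \<subseteq> (\<Inter>k. D k)" using zM by (auto simp: D_def)
    next
      show "(\<Inter>k. D k) \<subseteq> {z}"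
      proof
        fix y assume y: "y \<in> (\<Inter>k. D k)"
        have "dist z y = 0"
        proof (rule ccontr)
          assume "dist z y \<noteq> 0"
          then have "dist z y > 0" by simp
          then obtain k where k: "inverse (real (Suc k)) < dist z y / 2"
            using reals_Archimedean half_gt_zero by blast
          have "dist z y \<le> 2 * (1 / real (Suc k))" using y by (auto simp: D_def)
          then show False using k by (simp add: field_simps)
        qed
        then show "y \<in> {z}" by simp
      qed
    qed
    have "(\<lambda>k. measure \<mu> (D k)) \<longlonglongrightarrow> measure \<mu> {z}"
      using P.finite_Lim_measure_decseq[OF Ds dec] int by simp
    moreover have "\<forall>k. measure \<mu> (D k) \<ge> c/2" unfolding D_def by (intro allI step3) auto
    ultimately show ?thesis by (intro LIMSEQ_le_const) auto
  qed
  have sing: "{w} \<in> sets \<mu>" if "w \<in> M" for w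
    using bor[of "{w}"] that by auto
  have mfk: "measure \<mu> {(f^^k) z} = measure \<mu> {z}" for k
  proof (induction k)
    case 0 then show ?case by simp
  next
    case (Suc k)
    have wM: "(f^^k) z \<in> M" using fnM zM by blast
    have "f -` {f ((f^^k) z)} \<inter> M = {(f^^k) z}"
      using injf wM fM by (auto simp: inj_on_def)
    then have "measure \<mu> {f ((f^^k) z)} = measure \<mu> {(f^^k) z}"
      using fpres[OF sing[OF fM[OF wM]]] by simp
    then show ?case using Suc by simp
  qed
  have "\<not> inj (\<lambda>k. (f^^k) z)"
  proof
    assume injz: "inj (\<lambda>k. (f^^k) z)"
    obtain K :: nat where K: "real K > 2 / c" using reals_Archimedean2 by blast
    define S where "S = (\<lambda>k. (f^^k) z) ` {..<K}"
    have SM: "S \<subseteq> M" using fnM zM by (auto simp: S_def)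
    have "measure \<mu> S = (\<Sum>x\<in>S. measure \<mu> {x})"
      by (rule measure_eq_sum_singleton) (use SM sing S_def in \<open>auto simp: P.emeasure_eq_measure\<close>)
    also have "\<dots> = (\<Sum>k<K. measure \<mu> {(f^^k) z})"
      unfolding S_def by (rule sum.reindex_cong[where l="\<lambda>k. (f^^k) z"]) (use injz in \<open>auto simp: inj_on_def inj_def\<close>)
    also have "\<dots> = real K * measure \<mu> {z}" using mfk by simp
    finally have "measure \<mu> S = real K * measure \<mu> {z}" .
    moreover have "measure \<mu> S \<le> 1" by (rule P.prob_le_1)
    moreover have "real K * measure \<mu> {z} \<ge> real K * (c/2)" using mz by (intro mult_left_mono) auto
    moreover have "real K * (c/2) > 1" using K c by (simp add: field_simps)
    ultimately show False by linarith
  qed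
  then obtain i j where ij: "i < j" "(f^^i) z = (f^^j) z"
    unfolding inj_def by (metis linorder_neqE_nat)
  define p where "p = (f^^i) z"
  define n where "n = j - i"
  have n0: "n > 0" using ij n_def by simp
  have pM: "p \<in> M" using fnM zM p_def by blast
  have pn: "(f^^n) p = p"
  proof -
    have "(f^^n) p = (f^^(n + i)) z" by (simp add: p_def funpow_add)
    also have "n + i = j" using ij n_def by simp
    finally show ?thesis using ij p_def by simp
  qed
  define Orb where "Orb = {(f ^^ k) p | k. k < n}"
  have Oim: "Orb = (\<lambda>k. (f^^k) p) ` {..<n}" by (auto simp: Orb_def)
  have OM: "Orb \<subseteq> M" using fnM pM by (auto simp: Orb_def)
  have Os: "Orb \<in> sets \<mu>"
  proof -
    have "closed Orb" unfolding Oim by (intro finite_imp_closed) auto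
    then have "Orb \<inter> M \<in> sets \<mu>" by (intro bor) auto
    then show ?thesis using OM by (simp add: Int_absorb2)
  qed
  have Oinv: "f -` Orb \<inter> space \<mu> = Orb"
  proof
    show "Orb \<subseteq> f -` Orb \<inter> space \<mu>"
    proof
      fix q assume "q \<in> Orb"
      then obtain k where k: "k < n" "q = (f^^k) p" by (auto simp: Orb_def)
      have "f q \<in> Orb"
      proof (cases "Suc k < n")
        case True then show ?thesis using k by (auto simp: Orb_def intro!: exI[of _ "Suc k"])
      next
        case False then have "Suc k = n" using k by simp
        then have "f q = (f^^0) p" using k pn by (metis funpow.simps(2) funpow_0 o_apply)
        then show ?thesis using n0 unfolding Orb_def by (intro CollectI exI[of _ 0]) simp
      qed
      then show "q \<in> f -` Orb \<inter> space \<mu>" using OM \<open>q \<in> Orb\<close> spM by auto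
    qed
  next
    show "f -` Orb \<inter> space \<mu> \<subseteq> Orb"
    proof
      fix y assume y: "y \<in> f -` Orb \<inter> space \<mu>"
      then have yM: "y \<in> M" and "f y \<in> Orb" using spM by auto
      then obtain k where k: "k < n" "f y = (f^^k) p" by (auto simp: Orb_def)
      show "y \<in> Orb"
      proof (cases k)
        case 0
        have "f y = f ((f^^(n-1)) p)" using k 0 pn n0
          by (metis Suc_diff_1 funpow.simps(2) funpow_0 o_apply)
        then have "y = (f^^(n-1)) p" using injf yM fnM pM by (auto simp: inj_on_def)
        then show ?thesis using n0 by (auto simp: Orb_def)
      next
        case (Suc k')
        have "f y = f ((f^^k') p)" using k Suc by simp
        then have "y = (f^^k') p" using injf yM fnM pM by (auto simp: inj_on_def)
        then show ?thesis using k Suc by (auto simp: Orb_def)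
      qed
    qed
  qed
  have "emeasure \<mu> Orb = 0 \<or> emeasure \<mu> Orb = 1"
    using assms(5) Os Oinv by (simp add: ergodic_measure_def)
  moreover have "measure \<mu> Orb > 0"
  proof -
    have "p \<in> Orb" using n0 by (auto simp: Orb_def intro!: exI[of _ 0])
    then have "measure \<mu> {p} \<le> measure \<mu> Orb" by (intro P.finite_measure_mono Os) auto
    moreover have "measure \<mu> {p} = measure \<mu> {z}" using mfk p_def by simp
    ultimately show ?thesis using mz c by linarith
  qed
  ultimately have "emeasure \<mu> Orb = 1" using P.emeasure_eq_measure by auto
  then show ?thesis unfolding periodic_measure_def Orb_def using pM spM n0 pn Os Orb_def by blast
qed

end
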